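(* Consider a Boolean control network in algebraic form $$\mathbf{x}(t+1)=L\ltimes \mathbf{u}(t)\ltimes \mathbf{x}(t),\qquad \mathbf{y}(t)=H\mathbf{x}(t),\qquad t\in\mathbb{Z}_+,$$ with $\mathbf{x}(t)\in\mathcal{L}_N$, $\mathbf{u}(t)\in\mathcal{L}_M$, $\mathbf{y}(t)\in\mathcal{L}_P$, $L\in\mathcal{L}_{N\times NM}$, $H\in\mathcal{L}_{P\times N}$, and let $\{\mathbf{y}_r(t)\}_{t=1}^T$, $\mathbf{y}_r(t)\in\mathcal{L}_P$, be a finite-length reference output trajectory. Let $\mathcal{X}_1$ be the set of initial states $\mathbf{x}_1$ of all state trajectories $\{\mathbf{x}_t\}_{t=1}^T$ generated by the network (i.e. $\mathbf{x}_{t+1}=L\ltimes\mathbf{u}_t\ltimes\mathbf{x}_t$ for some $\mathbf{u}_t\in\mathcal{L}_M$, $t\in[1,T-1]$) that are compatible with the reference, i.e. $H\mathbf{x}_t=\mathbf{y}_r(t)$ for all $t\in[1,T]$. Then the following are equivalent: (i) the trajectory $\{\mathbf{y}_r(t)\}_{t=1}^T$ is trackable from every initial state $\mathbf{x}_0\in\mathcal{L}_N$; (ii) $\mathcal{X}_1\neq\emptyset$ and for every $\mathbf{x}_0\in\mathcal{L}_N$ there exists $\mathbf{u}\in\mathcal{L}_M$ such that $L\ltimes\mathbf{u}\ltimes\mathbf{x}_0\in\mathcal{X}_1$.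
   Context: $\delta_k^i$ denotes the $i$-th canonical vector of $\mathbb{R}^k$; $\mathcal{L}_k$ is the set of canonical vectors of $\mathbb{R}^k$, and $\mathcal{L}_{k\times q}$ the set of $k\times q$ matrices whose columns are in $\mathcal{L}_k$. $N=2^n$, $M=2^m$, $P=2^p$. Writing $L=[L_1\,|\,L_2\,|\,\cdots\,|\,L_M]$ with $L_i\in\mathcal{L}_{N\times N}$, the semi-tensor product satisfies $L\ltimes\delta_M^i\ltimes\mathbf{x}=L_i\mathbf{x}$ for $\mathbf{x}\in\mathcal{L}_N$. For $k\ge1$, $\mathbf{y}(k,\mathbf{x}(0),\{\mathbf{u}(t)\}_{t=0}^{k-1})$ denotes the output at time $k$ obtained from initial state $\mathbf{x}(0)$ applying inputs $\mathbf{u}(0),\dots,\mathbf{u}(k-1)$. The trajectory $\{\mathbf{y}_r(t)\}_{t=1}^T$ is trackable from $\mathbf{x}_0$ if there exist $\mathbf{u}(0),\dots,\mathbf{u}(T-1)\in\mathcal{L}_M$ such that $\mathbf{y}(t,\mathbf{x}_0,\{\mathbf{u}(\tau)\}_{\tau=0}^{t-1})=\mathbf{y}_r(t)$ for all $t\in[1,T]$. *)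

theory Defs
  imports Main
begin

(* A canonical vector delta_k^(i+1) in L_k is represented by its 0-based index i < k.
   A logical matrix A = delta_k[i_1,...,i_q] in L_{k x q} is represented by its
   column-index function  col :: nat => nat  (column j (0-based) is delta_k^(col j + 1)),
   with col j < k for all j < q. *)

definition logical_matrix :: "nat \<Rightarrow> nat \<Rightarrow> (nat \<Rightarrow> nat) \<Rightarrow> bool" where
  "logical_matrix k q col \<longleftrightarrow> (\<forall>j<q. col j < k)"

(* matrix-vector product of a logical matrix with a canonical vector:
   A delta_q^(j+1) = column j of A *)
definition lmv :: "(nat \<Rightarrow> nat) \<Rightarrow> nat \<Rightarrow> nat" where
  "lmv col j = col j"

(* semi-tensor product  L \<ltimes> delta_M^(u+1) \<ltimes> delta_N^(x+1) = L_(u+1) delta_N^(x+1)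
   = column  u*N + x  (0-based) of L, for L = [L_1 | ... | L_M] in L_{N x NM} *)
definition stp_step :: "(nat \<Rightarrow> nat) \<Rightarrow> nat \<Rightarrow> nat \<Rightarrow> nat \<Rightarrow> nat" where
  "stp_step L N u x = L (u * N + x)"

primrec state :: "(nat \<Rightarrow> nat) \<Rightarrow> nat \<Rightarrow> nat \<Rightarrow> (nat \<Rightarrow> nat) \<Rightarrow> nat \<Rightarrow> nat" where
  "state L N x0 us 0 = x0"
| "state L N x0 us (Suc t) = stp_step L N (us t) (state L N x0 us t)"

definition bcn_output :: "(nat \<Rightarrow> nat) \<Rightarrow> (nat \<Rightarrow> nat) \<Rightarrow> nat \<Rightarrow> nat \<Rightarrow> (nat \<Rightarrow> nat) \<Rightarrow> nat \<Rightarrow> nat" where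
  "bcn_output L H N x0 us t = lmv H (state L N x0 us t)"

definition trackable ::
  "(nat \<Rightarrow> nat) \<Rightarrow> (nat \<Rightarrow> nat) \<Rightarrow> nat \<Rightarrow> nat \<Rightarrow> nat \<Rightarrow> (nat \<Rightarrow> nat) \<Rightarrow> nat \<Rightarrow> bool" where
  "trackable L H N M T yr x0 \<longleftrightarrow>
     (\<exists>us. (\<forall>t<T. us t < M) \<and> (\<forall>t\<in>{1..T}. bcn_output L H N x0 us t = yr t))"

definition X1 ::
  "(nat \<Rightarrow> nat) \<Rightarrow> (nat \<Rightarrow> nat) \<Rightarrow> nat \<Rightarrow> nat \<Rightarrow> nat \<Rightarrow> (nat \<Rightarrow> nat) \<Rightarrow> nat set" where
  "X1 L H N M T yr = {x1. \<exists>xs. xs 1 = x1 \<and> (\<forall>t\<in>{1..T}. xs t < N)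
       \<and> (\<forall>t\<in>{1..T-1}. \<exists>u<M. xs (t+1) = stp_step L N u (xs t))
       \<and> (\<forall>t\<in>{1..T}. lmv H (xs t) = yr t)}"

end

theory Submission
  imports Defs
begin

lemma state_bound:
  assumes "logical_matrix N (N * M) L" "x0 < N" "\<forall>s<t. us s < M"
  shows "state L N x0 us t < N"
  using assms(3)
proof (induction t)
  case 0 then show ?case using assms(2) by simp
next
  case (Suc t)
  then have h: "state L N x0 us t < N" "us t < M" by auto
  have "us t * N + state L N x0 us t < N * M"
  proof -
    have "us t * N + state L N x0 us t < us t * N + N" using h by simp
    also have "\<dots> = (us t + 1) * N" by simp
    also have "\<dots> \<le> M * N" using h(2) by (intro mult_right_mono) auto
    finally show ?thesis by (simp add: mult.commute)
  qed
  then show ?case using assms(1) by (simp add: logical_matrix_def stp_step_def)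
qed

theorem theorem1:
  fixes n m p T :: nat and N M P :: nat
    and L H :: "nat \<Rightarrow> nat" and yr :: "nat \<Rightarrow> nat"
  assumes "N = 2 ^ n" and "M = 2 ^ m" and "P = 2 ^ p"
    and "logical_matrix N (N * M) L"
    and "logical_matrix P N H"
    and "T \<ge> 1"
    and "\<forall>t\<in>{1..T}. yr t < P"
  shows "(\<forall>x0<N. trackable L H N M T yr x0) \<longleftrightarrow>
         (X1 L H N M T yr \<noteq> {} \<and>
          (\<forall>x0<N. \<exists>u<M. stp_step L N u x0 \<in> X1 L H N M T yr))"
proof
  have N0: "0 < N" using assms(1) by simp
  assume A: "\<forall>x0<N. trackable L H N M T yr x0"
  have key: "\<exists>u<M. stp_step L N u x0 \<in> X1 L H N M T yr" if x0: "x0 < N" for x0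
  proof -
    from A x0 obtain us where us: "\<forall>t<T. us t < M"
      "\<forall>t\<in>{1..T}. bcn_output L H N x0 us t = yr t"
      unfolding trackable_def by blast
    define xs where "xs = state L N x0 us"
    have "stp_step L N (us 0) x0 \<in> X1 L H N M T yr"
      unfolding X1_def
    proof (intro CollectI exI[of _ xs] conjI ballI)
      show "xs 1 = stp_step L N (us 0) x0" by (simp add: xs_def)
    next
      fix t assume "t \<in> {1..T}"
      then show "xs t < N" unfolding xs_def
        using state_bound[OF assms(4) x0, of t us] us(1) by auto
    next
      fix t assume "t \<in> {1..T-1}"
      then have "us t < M" using us(1) by auto
      then show "\<exists>u<M. xs (t+1) = stp_step L N u (xs t)"
        by (auto simp: xs_def)
    next
      fix t assume "t \<in> {1..T}"
      then show "lmv H (xs t) = yr t" using us(2) by (simp add: xs_def bcn_output_def)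
    qed
    moreover have "us 0 < M" using us(1) assms(6) by auto
    ultimately show ?thesis by blast
  qed
  show "X1 L H N M T yr \<noteq> {} \<and> (\<forall>x0<N. \<exists>u<M. stp_step L N u x0 \<in> X1 L H N M T yr)"
    using key N0 by blast
next
  assume B: "X1 L H N M T yr \<noteq> {} \<and> (\<forall>x0<N. \<exists>u<M. stp_step L N u x0 \<in> X1 L H N M T yr)"
  show "\<forall>x0<N. trackable L H N M T yr x0"
  proof (intro allI impI)
    fix x0 assume x0: "x0 < N"
    from B x0 obtain u xs where u: "u < M" and xs: "xs 1 = stp_step L N u x0"
      "\<forall>t\<in>{1..T-1}. \<exists>u<M. xs (t+1) = stp_step L N u (xs t)"
      "\<forall>t\<in>{1..T}. lmv H (xs t) = yr t"
      unfolding X1_def by blast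
    define us where "us t = (if t = 0 then u else (SOME v. v < M \<and> xs (t+1) = stp_step L N v (xs t)))" for t
    have us_ok: "us t < M \<and> xs (t+1) = stp_step L N (us t) (xs t)" if "1 \<le> t" "t \<le> T - 1" for t
    proof -
      from xs(2) that have "\<exists>v. v < M \<and> xs (t+1) = stp_step L N v (xs t)" by auto
      then have "(SOME v. v < M \<and> xs (t+1) = stp_step L N v (xs t)) < M \<and>
          xs (t+1) = stp_step L N (SOME v. v < M \<and> xs (t+1) = stp_step L N v (xs t)) (xs t)"
        by (rule someI_ex)
      then show ?thesis using that unfolding us_def by simp
    qed
    have st: "state L N x0 us t = xs t" if "1 \<le> t" "t \<le> T" for t
      using that
    proof (induction t)
      case 0 then show ?case by simp
    next
      case (Suc t)
      show ?case
      proof (cases "t = 0")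
        case True then show ?thesis using xs(1) by (simp add: us_def)
      next
        case False
        then have "state L N x0 us t = xs t" using Suc by auto
        then show ?thesis using us_ok[of t] False Suc.prems by auto
      qed
    qed
    have "\<forall>t<T. us t < M"
    proof (intro allI impI)
      fix t assume "t < T"
      then show "us t < M" using u us_ok[of t] by (cases "t = 0") (auto simp: us_def)
    qed
    moreover have "\<forall>t\<in>{1..T}. bcn_output L H N x0 us t = yr t"
      using st xs(3) by (simp add: bcn_output_def)
    ultimately show "trackable L H N M T yr x0" unfolding trackable_def by blast
  qed
qed

end
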